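(* For $n\ge2$ and all $P,Q\in\Gamma_n$, $D_{\Psi\Delta}(P\|Q)\le \frac65 D_{\Psi I}(P\|Q)$.
   Context: $\Gamma_n=\{P=(p_1,\dots,p_n): p_i>0,\ \sum p_i=1\}$. $\Delta(P\|Q)=\sum_{i=1}^n\frac{(p_i-q_i)^2}{p_i+q_i}$; $\Psi(P\|Q)=\sum_{i=1}^n\frac{(p_i-q_i)^2(p_i+q_i)}{p_iq_i}$; $I(P\|Q)=\frac12\Big[\sum_{i=1}^n p_i\ln\frac{2p_i}{p_i+q_i}+\sum_{i=1}^n q_i\ln\frac{2q_i}{p_i+q_i}\Big]$. $D_{\Psi\Delta}=\frac1{16}\Psi-\frac14\Delta$, $D_{\Psi I}=\frac1{16}\Psi-I$. *)

theory Defs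
  imports Complex_Main
begin

definition Gamma :: "nat \<Rightarrow> (nat \<Rightarrow> real) set" where
  "Gamma n = {p. (\<forall>i<n. p i > 0) \<and> (\<Sum>i<n. p i) = 1}"

definition Delta_div :: "nat \<Rightarrow> (nat \<Rightarrow> real) \<Rightarrow> (nat \<Rightarrow> real) \<Rightarrow> real" where
  "Delta_div n p q = (\<Sum>i<n. (p i - q i)^2 / (p i + q i))"

definition Psi_div :: "nat \<Rightarrow> (nat \<Rightarrow> real) \<Rightarrow> (nat \<Rightarrow> real) \<Rightarrow> real" where
  "Psi_div n p q = (\<Sum>i<n. (p i - q i)^2 * (p i + q i) / (p i * q i))"

definition I_div :: "nat \<Rightarrow> (nat \<Rightarrow> real) \<Rightarrow> (nat \<Rightarrow> real) \<Rightarrow> real" where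
  "I_div n p q = (1/2) * ((\<Sum>i<n. p i * ln (2 * p i / (p i + q i)))
                         + (\<Sum>i<n. q i * ln (2 * q i / (p i + q i))))"

definition D_Psi_Delta :: "nat \<Rightarrow> (nat \<Rightarrow> real) \<Rightarrow> (nat \<Rightarrow> real) \<Rightarrow> real" where
  "D_Psi_Delta n p q = (1/16) * Psi_div n p q - (1/4) * Delta_div n p q"

definition D_Psi_I :: "nat \<Rightarrow> (nat \<Rightarrow> real) \<Rightarrow> (nat \<Rightarrow> real) \<Rightarrow> real" where
  "D_Psi_I n p q = (1/16) * Psi_div n p q - I_div n p q"

end

theory Submission
  imports Defs
begin

lemma lemA:
  fixes u :: real assumes "0 \<le> u" "u < 1"
  shows "ln (1+u) - ln (1-u) \<le> 5/3*u + u/(3*(1-u^2)^2)"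
proof -
  define k where "k x = 5/3*x + x/(3*(1-x^2)^2) - ln (1+x) + ln (1-x)" for x :: real
  have "k 0 \<le> k u"
  proof (rule DERIV_nonneg_imp_nondecreasing[OF assms(1)])
    fix x assume x: "0 \<le> x" "x \<le> u"
    then have x1: "x < 1" using assms by simp
    have w: "0 < 1 - x^2" using x x1
      by (metis abs_of_nonneg diff_gt_0_iff_gt abs_square_less_1)
    have nz: "(1 - x^2) \<noteq> 0" using w by simp
    have d1: "((\<lambda>z. ln (1+z)) has_real_derivative 1/(1+x)) (at x)"
      using x by (auto intro!: derivative_eq_intros)
    have d2: "((\<lambda>z. ln (1-z)) has_real_derivative -1/(1-x)) (at x)"
      using x1 by (auto intro!: derivative_eq_intros)
    have d0: "((\<lambda>z. 5/3*z) has_real_derivative 5/3) (at x)"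
      by (auto intro!: derivative_eq_intros)
    have d3: "((\<lambda>z. z/(3*(1-z^2)^2)) has_real_derivative (1+3*x^2)/(3*(1-x^2)^3)) (at x)"
      apply (rule derivative_eq_intros refl)+
      using nz apply simp
      using nz apply (simp add: field_simps)
      apply (simp add: power2_eq_square power3_eq_cube)
      by algebra
    have D0: "(k has_real_derivative 5/3 + (1+3*x^2)/(3*(1-x^2)^3) - 1/(1+x) + -1/(1-x)) (at x)"
      unfolding k_def by (intro DERIV_add DERIV_diff d0 d3 d1 d2)
    have "5/3 + (1+3*x^2)/(3*(1-x^2)^3) - 1/(1+x) + -1/(1-x) = (1-x^2-1)^2*(5*(1-x^2)+4) / (3*(1-x^2)^3)"
    proof -
      have a: "1+x \<noteq> 0" "1-x \<noteq> 0" "(1-x^2)^3 \<noteq> 0" using x x1 nz by auto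
      have e: "1/(1+x) + 1/(1-x) = 2/(1-x^2)" using a w
        by (simp add: field_simps power2_eq_square)
      have g: "\<And>w y::real. w \<noteq> 0 \<Longrightarrow> y = 1 - w \<Longrightarrow> 5/3 + (1+3*y)/(3*w^3) - 2/w = (w-1)^2*(5*w+4)/(3*w^3)"
        by (simp add: field_simps power2_eq_square power3_eq_cube) algebra
      have "5/3 + (1+3*x^2)/(3*(1-x^2)^3) - 1/(1+x) + -1/(1-x) = 5/3 + (1+3*x^2)/(3*(1-x^2)^3) - 2/(1-x^2)"
        using e by simp
      also have "\<dots> = ((1-x^2)-1)^2*(5*(1-x^2)+4)/(3*(1-x^2)^3)" by (rule g) (use nz in auto)
      finally show ?thesis .
    qed
    also have "\<dots> \<ge> 0" using w by (intro divide_nonneg_pos mult_nonneg_nonneg) auto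
    finally show "\<exists>y. (k has_real_derivative y) (at x) \<and> 0 \<le> y" using D0 by blast
  qed
  then show ?thesis by (simp add: k_def)
qed

lemma lemB0:
  fixes u :: real assumes "0 \<le> u" "u < 1"
  shows "0 \<le> u^2/(10*(1-u^2)) + u^2/2 - 3/5*((1+u)*ln(1+u) + (1-u)*ln(1-u))"
proof -
  define g where "g x = x^2/(10*(1-x^2)) + x^2/2 - 3/5*((1+x)*ln(1+x) + (1-x)*ln(1-x))" for x :: real
  have "g 0 \<le> g u"
  proof (rule DERIV_nonneg_imp_nondecreasing[OF assms(1)])
    fix x assume x: "0 \<le> x" "x \<le> u"
    then have x1: "x < 1" using assms by simp
    have w: "0 < 1 - x^2" using x x1
      by (metis abs_of_nonneg diff_gt_0_iff_gt abs_square_less_1)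
    have nz: "(1 - x^2) \<noteq> 0" using w by simp
    have d1: "((\<lambda>z. (1+z)*ln (1+z)) has_real_derivative ln(1+x) + 1) (at x)"
      using x by (auto intro!: derivative_eq_intros)
    have d2: "((\<lambda>z. (1-z)*ln (1-z)) has_real_derivative -ln(1-x) - 1) (at x)"
      using x1 by (auto intro!: derivative_eq_intros)
    have d0: "((\<lambda>z. z^2/2) has_real_derivative x) (at x)"
      by (auto intro!: derivative_eq_intros)
    have d3: "((\<lambda>z. z^2/(10*(1-z^2))) has_real_derivative x/(5*(1-x^2)^2)) (at x)"
      apply (rule derivative_eq_intros refl)+
      using nz apply simp
      using nz apply (simp add: field_simps)
      apply (subgoal_tac "100 + x^4*100 - x^2*200 = 100*(1-x^2)^2")
       apply (simp add: nz)
      by (simp add: power2_eq_square power4_eq_xxxx algebra_simps)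
    have D0: "(g has_real_derivative x/(5*(1-x^2)^2) + x - 3/5*((ln(1+x) + 1) + (-ln(1-x) - 1))) (at x)"
      unfolding g_def by (intro DERIV_add DERIV_diff DERIV_cmult d0 d3 d1 d2)
    have "ln (1+x) - ln (1-x) \<le> 5/3*x + x/(3*(1-x^2)^2)" using lemA x x1 by simp
    then have "0 \<le> x/(5*(1-x^2)^2) + x - 3/5*((ln(1+x) + 1) + (-ln(1-x) - 1))"
      by (simp add: field_simps)
    then show "\<exists>y. (g has_real_derivative y) (at x) \<and> 0 \<le> y" using D0 by blast
  qed
  then show ?thesis by (simp add: g_def)
qed

lemma lemB:
  fixes u :: real assumes "-1 < u" "u < 1"
  shows "0 \<le> u^2/(10*(1-u^2)) + u^2/2 - 3/5*((1+u)*ln(1+u) + (1-u)*ln(1-u))"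
proof (cases "0 \<le> u")
  case True then show ?thesis using lemB0 assms by simp
next
  case False
  have "0 \<le> (-u)^2/(10*(1-(-u)^2)) + (-u)^2/2 - 3/5*((1+-u)*ln(1+-u) + (1-(-u))*ln(1-(-u)))"
    using lemB0[of "-u"] False assms by simp
  then show ?thesis by (simp add: algebra_simps)
qed


lemma lemC:
  fixes p q :: real assumes p: "0 < p" and q: "0 < q"
  shows "0 \<le> (6/5)*(1/16)*((p - q)^2 * (p + q) / (p * q)) - (1/16)*((p - q)^2 * (p + q) / (p * q))
              + (1/4)*((p - q)^2 / (p + q))
              - (6/5)*(1/2)*(p * ln (2 * p / (p + q))) - (6/5)*(1/2)*(q * ln (2 * q / (p + q)))"
proof -
  define u where "u = (p-q)/(p+q)"
  have pq: "p + q > 0" using p q by simp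
  have u1: "1 + u = 2*p/(p+q)" "1 - u = 2*q/(p+q)" unfolding u_def using pq by (simp_all add: field_simps)
  have um: "-1 < u" "u < 1" using u1 p q pq by (smt (verit) divide_pos_pos)+
  have G: "0 \<le> u^2/(10*(1-u^2)) + u^2/2 - 3/5*((1+u)*ln(1+u) + (1-u)*ln(1-u))"
    using lemB um by blast
  have key: "\<And>A B. (6/5)*(1/16)*((p - q)^2 * (p + q) / (p * q)) - (1/16)*((p - q)^2 * (p + q) / (p * q))
              + (1/4)*((p - q)^2 / (p + q))
              - (6/5)*(1/2)*(p * A) - (6/5)*(1/2)*(q * B)
     = ((p+q)/2) * (u^2/(10*(1-u^2)) + u^2/2 - 3/5*((1+u)*A + (1-u)*B))"
  proof -
    fix A B
    define s where "s = (p+q)/2"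
    have ps: "p = s*(1+u)" "q = s*(1-u)" "p + q = 2*s" unfolding s_def u1 using pq by (simp_all add: field_simps)
    have nz: "s \<noteq> 0" "1+u \<noteq> 0" "1-u \<noteq> 0" using pq um unfolding s_def
      by simp_all
    have f: "1-u^2 = (1+u)*(1-u)" by (simp add: power2_eq_square algebra_simps)
    have e1: "(p-q)^2 = s^2*(4*u^2)" unfolding ps(1,2) by (simp add: power2_eq_square algebra_simps)
    have e2: "p*q = s^2*((1+u)*(1-u))" unfolding ps(1,2) by (simp add: power2_eq_square algebra_simps)
    have h1: "(p-q)^2*(p+q)/(p*q) = 8*s*u^2/((1+u)*(1-u))"
    proof -
      have g: "\<And>X. X \<noteq> 0 \<Longrightarrow> s^2*(4*u^2)*(2*s)/(s^2*X) = 8*s*u^2/X"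
        using nz by (simp add: field_simps power2_eq_square)
      show ?thesis unfolding e1 e2 ps(3) by (rule g) (use nz in simp)
    qed
    have h2: "(p-q)^2/(p+q) = 2*s*u^2"
      unfolding ps using nz by (simp add: field_simps power2_eq_square)
    define X where "X = (1+u)*(1-u)"
    have X0: "X \<noteq> 0" using nz unfolding X_def by simp
    show "?thesis A B" unfolding h1 h2 f X_def[symmetric] unfolding ps(1,2) using X0
      by (simp add: field_simps power2_eq_square)
  qed
  show ?thesis unfolding key u1[symmetric]
    using G pq by simp
qed

theorem proposition5p10:
  fixes n :: nat and P Q :: "nat \<Rightarrow> real"
  assumes "n \<ge> 2" and "P \<in> Gamma n" and "Q \<in> Gamma n"
  shows "D_Psi_Delta n P Q \<le> (6/5) * D_Psi_I n P Q"
proof -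
  have pos: "\<And>i. i < n \<Longrightarrow> P i > 0 \<and> Q i > 0" using assms(2,3) by (simp add: Gamma_def)
  define T where "T i = (6/5)*(1/16)*((P i - Q i)^2 * (P i + Q i) / (P i * Q i)) - (1/16)*((P i - Q i)^2 * (P i + Q i) / (P i * Q i))
              + (1/4)*((P i - Q i)^2 / (P i + Q i))
              - (6/5)*(1/2)*(P i * ln (2 * P i / (P i + Q i))) - (6/5)*(1/2)*(Q i * ln (2 * Q i / (P i + Q i)))" for i
  have eq: "(6/5) * D_Psi_I n P Q - D_Psi_Delta n P Q = (\<Sum>i<n. T i)"
    unfolding T_def D_Psi_I_def D_Psi_Delta_def Psi_div_def Delta_div_def I_div_def
    by (simp add: sum.distrib sum_subtractf sum_distrib_left algebra_simps)
  have "0 \<le> (\<Sum>i<n. T i)"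
    by (rule sum_nonneg) (use pos lemC in \<open>auto simp: T_def\<close>)
  then show ?thesis using eq by simp
qed

end
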